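(* Let $\mathcal S$ be a finite nonempty set of positive half-integers (elements of $\tfrac12\mathbb Z_{>0}$), and let $(\rho_{s'})_{s'\in\mathcal S}$ be positive real numbers with $\sum_{s'\in\mathcal S}\rho_{s'}=1$. For $s\in\mathcal S$ define the vacuum energy density $$\mathcal E_0^{(s)}=-\sum_{s'\in\mathcal S}\rho_{s'}\int_{-\infty}^{\infty}\sigma^{(0)}(\lambda)\,\Psi^{(s')}_{2s}(\lambda)\,d\lambda ,\qquad \sigma^{(0)}(\lambda)=\frac{1}{2\cosh(\pi\lambda)} .$$ Then, for every $s\in\mathcal S$, $$\mathcal E_0^{(s)}=-\sum_{s'\in\mathcal S}\rho_{s'}\left(\psi\Big(\frac{s'+s+1}{2}\Big)-\psi\Big(\frac{|s'-s|+1}{2}\Big)\right),$$ where $\psi$ is the Euler digamma function.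
   Context: This is the energy per site of the antiferromagnetic vacuum of a periodic $L_0$-regular $gl(2)$ (XXX) spin chain whose site spins take the values in $\mathcal S$, the value $s'$ occurring with density $\rho_{s'}$ in the repeated motif, the energy being that of the Hamiltonian $H^{(s)}$ built from the transfer matrix with auxiliary space of spin $s$. In the thermodynamic limit under the string hypothesis the vacuum consists of filled seas of $2s'$-strings ($s'\in\mathcal S$) with root densities $\rho_{s'}\sigma^{(0)}(\lambda)$, and the energy per site is given by the integral in the claim. Here, for a positive integer $p$ and $m\in\tfrac12\mathbb Z_{>0}$, $$\Psi^{(m)}_{p}(\lambda)=\sum_{\alpha=-m+\frac12}^{m-\frac12} f_{\alpha+\frac p2}(\lambda),$$ the sum running over $\alpha\in\{-m+\tfrac12,-m+\tfrac32,\dots,m-\tfrac12\}$, where $f_x(\lambda)=\dfrac{2x}{\lambda^2+x^2}$ for real $x\neq0$ and $f_0\equiv0$ (this is the energy contribution of a $2m$-string with real center $\lambda$). *)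

theory Defs
  imports "HOL-Analysis.Analysis"
begin

definition string_f :: "real \<Rightarrow> real \<Rightarrow> real" where
  "string_f x lam = (if x = 0 then 0 else 2 * x / (lam\<^sup>2 + x\<^sup>2))"

text \<open>Psi^(m)_p(lambda) = sum of f_(alpha + p/2)(lambda) over
  alpha in {-m+1/2, -m+3/2, ..., m-1/2}, i.e. alpha = -m + 1/2 + k for k = 0..2m-1
  (m a positive half-integer, so 2m is a positive integer).\<close>
definition Psi :: "real \<Rightarrow> real \<Rightarrow> real \<Rightarrow> real" where
  "Psi m p lam = (\<Sum>k<nat \<lfloor>2 * m\<rfloor>. string_f (- m + 1/2 + real k + p / 2) lam)"

definition sigma0 :: "real \<Rightarrow> real" where
  "sigma0 lam = 1 / (2 * cosh (pi * lam))"

definition vacuum_energy :: "real set \<Rightarrow> (real \<Rightarrow> real) \<Rightarrow> real \<Rightarrow> real" where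
  "vacuum_energy S \<rho> s =
     - (\<Sum>s'\<in>S. \<rho> s' * (\<integral>lam. sigma0 lam * Psi s' (2 * s) lam \<partial>lborel))"

definition half_pos_int :: "real \<Rightarrow> bool" where
  "half_pos_int x \<longleftrightarrow> (\<exists>n::nat. n > 0 \<and> x = real n / 2)"

end

theory Submission
  imports Defs "HOL-Real_Asymp.Real_Asymp"
begin



lemma FTC_real_line:
  fixes f F :: "real \<Rightarrow> real"
  assumes F: "\<And>x. DERIV F x :> f x"
  assumes f: "\<And>x. isCont f x"
  assumes nn: "\<And>x. 0 \<le> f x"
  assumes A: "(F \<longlongrightarrow> A) at_bot"
  assumes B: "(F \<longlongrightarrow> B) at_top"
  shows "integrable lborel f" "integral\<^sup>L lborel f = B - A"
proof -
  have 1: "set_integrable lborel (einterval (-\<infinity>) \<infinity>) f" "(LBINT x=-\<infinity>..\<infinity>. f x) = B - A"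
    by (rule interval_integral_FTC_nonneg[where F=F and A=A and B=B]; simp add: F f nn ereal_tendsto_simps A B)+
  have e: "einterval (-\<infinity>) \<infinity> = (UNIV :: real set)" by (auto simp: einterval_def)
  from 1(1) show "integrable lborel f" by (simp add: e set_integrable_def)
  from 1(2) show "integral\<^sup>L lborel f = B - A"
    by (simp add: interval_lebesgue_integral_def e set_lebesgue_integral_def)
qed

lemma inv_aux: "(x::real) \<noteq> 0 \<Longrightarrow> inverse (1 + (l / x)\<^sup>2) = x\<^sup>2 / (l\<^sup>2 + x\<^sup>2)"
  by (simp add: field_simps power2_eq_square)
lemma d1: assumes "x > 0" shows "DERIV (\<lambda>l. arctan (l / x) + x * l / (l\<^sup>2 + x\<^sup>2)) l :> 2 * x^3 / (l\<^sup>2 + x\<^sup>2)\<^sup>2"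
proof -
  have p: "l\<^sup>2 + x\<^sup>2 \<noteq> 0" "x \<noteq> 0" using assms by (auto simp: add_pos_pos)
  show ?thesis
  apply (rule derivative_eq_intros refl | simp add: p inv_aux)+
    using p apply (simp add: divide_simps)
    apply (simp add: algebra_simps power2_eq_square power3_eq_cube)
  done
qed
lemma d2: assumes "x > 0" "b > 0" "b\<^sup>2 - x\<^sup>2 \<noteq> 0" shows "DERIV (\<lambda>l. b * arctan (l / x) - x * arctan (l / b)) l :> (b\<^sup>2 - x\<^sup>2) * (x * b / ((l\<^sup>2 + x\<^sup>2) * (l\<^sup>2 + b\<^sup>2)))"
proof -
  have p: "l\<^sup>2 + x\<^sup>2 \<noteq> 0" "x \<noteq> 0" "l\<^sup>2 + b\<^sup>2 \<noteq> 0" "b \<noteq> 0" using assms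
    by (auto simp: add_pos_pos)
  show ?thesis
  apply (rule derivative_eq_intros refl | simp add: p inv_aux)+
    using p apply (simp add: divide_simps)
    apply (simp add: power2_eq_square)
    apply algebra
  done
qed

lemma arctan_bot: "(c::real) > 0 \<Longrightarrow> ((\<lambda>l. arctan (l / c)) \<longlongrightarrow> - (pi/2)) at_bot"
  by (intro filterlim_compose[OF tendsto_arctan_at_bot]) real_asymp
lemma arctan_top: "(c::real) > 0 \<Longrightarrow> ((\<lambda>l. arctan (l / c)) \<longlongrightarrow> (pi/2)) at_top"
  by (intro filterlim_compose[OF tendsto_arctan_at_top]) real_asymp

lemma lorentz_int:
  fixes a :: real assumes a: "a > 0"
  shows "integrable lborel (\<lambda>l. a / (l\<^sup>2 + a\<^sup>2))" "integral\<^sup>L lborel (\<lambda>l. a / (l\<^sup>2 + a\<^sup>2)) = pi"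
proof -
  have d: "DERIV (\<lambda>l. arctan (l / a)) l :> a / (l\<^sup>2 + a\<^sup>2)" for l
    using a by (auto intro!: derivative_eq_intros simp: field_simps power2_eq_square)
  have c: "isCont (\<lambda>l. a / (l\<^sup>2 + a\<^sup>2)) l" for l
    using a by (intro continuous_intros) (auto simp: add_pos_pos)
  have n: "0 \<le> a / (l\<^sup>2 + a\<^sup>2)" for l using a by simp
  have A: "((\<lambda>l. arctan (l / a)) \<longlongrightarrow> - (pi/2)) at_bot"
    using a by (intro filterlim_compose[OF tendsto_arctan_at_bot]) (real_asymp)
  have B: "((\<lambda>l. arctan (l / a)) \<longlongrightarrow> (pi/2)) at_top"
    using a by (intro filterlim_compose[OF tendsto_arctan_at_top]) (real_asymp)
  show "integrable lborel (\<lambda>l. a / (l\<^sup>2 + a\<^sup>2))" using FTC_real_line(1)[OF d c n A B] .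
  show "integral\<^sup>L lborel (\<lambda>l. a / (l\<^sup>2 + a\<^sup>2)) = pi" using FTC_real_line(2)[OF d c n A B] by simp
qed

lemma pair_int:
  fixes x b :: real assumes x: "x > 0" and b: "b > 0"
  shows "integrable lborel (\<lambda>l. x * b / ((l\<^sup>2 + x\<^sup>2) * (l\<^sup>2 + b\<^sup>2)))"
        "integral\<^sup>L lborel (\<lambda>l. x * b / ((l\<^sup>2 + x\<^sup>2) * (l\<^sup>2 + b\<^sup>2))) = pi / (x + b)"
proof -
  have c: "isCont (\<lambda>l. x * b / ((l\<^sup>2 + x\<^sup>2) * (l\<^sup>2 + b\<^sup>2))) l" for l
    using x b by (intro continuous_intros) (auto simp: add_pos_pos)
  have n: "0 \<le> x * b / ((l\<^sup>2 + x\<^sup>2) * (l\<^sup>2 + b\<^sup>2))" for l using x b by simp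
  have "integrable lborel (\<lambda>l. x * b / ((l\<^sup>2 + x\<^sup>2) * (l\<^sup>2 + b\<^sup>2))) \<and>
        integral\<^sup>L lborel (\<lambda>l. x * b / ((l\<^sup>2 + x\<^sup>2) * (l\<^sup>2 + b\<^sup>2))) = pi / (x + b)"
  proof (cases "x = b")
    case True
    define F where "F l = inverse (2 * x) * (arctan (l / x) + x * l / (l\<^sup>2 + x\<^sup>2))" for l
    have d: "DERIV F l :> x * b / ((l\<^sup>2 + x\<^sup>2) * (l\<^sup>2 + b\<^sup>2))" for l
    proof -
      have "DERIV F l :> inverse (2 * x) * (2 * x^3 / (l\<^sup>2 + x\<^sup>2)\<^sup>2)"
        unfolding F_def by (rule DERIV_cmult[OF d1[OF x]])
      moreover have "inverse (2 * x) * (2 * x^3 / (l\<^sup>2 + x\<^sup>2)\<^sup>2) = x * b / ((l\<^sup>2 + x\<^sup>2) * (l\<^sup>2 + b\<^sup>2))"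
        using x True by (simp add: power2_eq_square power3_eq_cube)
      ultimately show ?thesis by simp
    qed
    have A: "(F \<longlongrightarrow> inverse (2 * x) * (- (pi/2) + 0)) at_bot"
      unfolding F_def using x
      by (intro tendsto_intros filterlim_compose[OF tendsto_arctan_at_bot]; real_asymp)
    have B: "(F \<longlongrightarrow> inverse (2 * x) * ((pi/2) + 0)) at_top"
      unfolding F_def using x
      by (intro tendsto_intros filterlim_compose[OF tendsto_arctan_at_top]; real_asymp)
    have e: "inverse (2 * x) * ((pi/2) + 0) - inverse (2 * x) * (- (pi/2) + 0) = pi / (x + b)"
      using True x by (simp add: divide_simps)
    show ?thesis using FTC_real_line[OF d c n A B] e by metis
  next
    case False
    define F where "F l = inverse (b\<^sup>2 - x\<^sup>2) * (b * arctan (l / x) - x * arctan (l / b))" for l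
    have f: "b\<^sup>2 - x\<^sup>2 = (b - x) * (b + x)" by (simp add: algebra_simps power2_eq_square)
    have bx: "b - x \<noteq> 0" "b + x \<noteq> 0" using False x b by auto
    have ne: "b\<^sup>2 - x\<^sup>2 \<noteq> 0" unfolding f using bx by simp
    have d: "DERIV F l :> x * b / ((l\<^sup>2 + x\<^sup>2) * (l\<^sup>2 + b\<^sup>2))" for l
    proof -
      have "DERIV F l :> inverse (b\<^sup>2 - x\<^sup>2) * ((b\<^sup>2 - x\<^sup>2) * (x * b / ((l\<^sup>2 + x\<^sup>2) * (l\<^sup>2 + b\<^sup>2))))"
        unfolding F_def by (rule DERIV_cmult[OF d2[OF x b ne]])
      then show ?thesis using ne by (simp only: mult.assoc[symmetric] left_inverse[OF ne] mult_1)
    qed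
    have A: "(F \<longlongrightarrow> inverse (b\<^sup>2 - x\<^sup>2) * (b * (- (pi/2)) - x * (- (pi/2)))) at_bot"
      unfolding F_def using x b
      by (intro tendsto_intros arctan_bot)
    have B: "(F \<longlongrightarrow> inverse (b\<^sup>2 - x\<^sup>2) * (b * (pi/2) - x * (pi/2))) at_top"
      unfolding F_def using x b
      by (intro tendsto_intros arctan_top)
    have e: "inverse (b\<^sup>2 - x\<^sup>2) * (b * (pi/2) - x * (pi/2)) - inverse (b\<^sup>2 - x\<^sup>2) * (b * (- (pi/2)) - x * (- (pi/2)))
        = pi / (x + b)"
    proof -
      have "inverse (b\<^sup>2 - x\<^sup>2) * (b * (pi/2) - x * (pi/2)) - inverse (b\<^sup>2 - x\<^sup>2) * (b * (- (pi/2)) - x * (- (pi/2)))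
        = inverse ((b - x) * (b + x)) * ((b - x) * pi)" unfolding f by (simp add: algebra_simps)
      also have "\<dots> = pi / (x + b)" using bx by (simp add: inverse_eq_divide add.commute)
      finally show ?thesis .
    qed
    show ?thesis using FTC_real_line[OF d c n A B] e by metis
  qed
  then show "integrable lborel (\<lambda>l. x * b / ((l\<^sup>2 + x\<^sup>2) * (l\<^sup>2 + b\<^sup>2)))"
        "integral\<^sup>L lborel (\<lambda>l. x * b / ((l\<^sup>2 + x\<^sup>2) * (l\<^sup>2 + b\<^sup>2))) = pi / (x + b)" by auto
qed



lemma sin_pi_nonzero:
  fixes z :: complex assumes "z \<notin> \<int>" shows "sin (of_real pi * z) \<noteq> 0"
proof
  assume "sin (of_real pi * z) = 0"
  then obtain n :: int where "of_real pi * z = of_real (n * pi)" by (auto simp: sin_eq_0)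
  then have "z = of_int n" by (simp add: field_simps)
  then show False using assms by simp
qed

lemma cot_Digamma:
  fixes z :: complex assumes z: "z \<notin> \<int>"
  shows "of_real pi * cot (of_real pi * z) = Digamma (1 - z) - Digamma z"
proof -
  define g where "g t = Gamma t * Gamma (1 - t) * sin (of_real pi * t)" for t :: complex
  have z1: "z \<notin> \<int>\<^sub>\<le>\<^sub>0" using z by (auto simp: nonpos_Ints_def)
  have z2: "1 - z \<notin> \<int>\<^sub>\<le>\<^sub>0"
  proof
    assume "1 - z \<in> \<int>\<^sub>\<le>\<^sub>0"
    then obtain n where "1 - z = of_int n" by (auto simp: nonpos_Ints_def)
    then have "z = of_int (1 - n)" by (simp add: algebra_simps)
    then show False using z by simp
  qed
  have gpi: "g t = of_real pi" if "t \<notin> \<int>" for t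
    using Gamma_reflection_complex[of t] sin_pi_nonzero[OF that] unfolding g_def by simp
  have D1: "(g has_field_derivative
      (Gamma z * Digamma z * Gamma (1 - z) * sin (of_real pi * z)
       + Gamma z * (- (Gamma (1 - z) * Digamma (1 - z))) * sin (of_real pi * z)
       + Gamma z * Gamma (1 - z) * (cos (of_real pi * z) * of_real pi))) (at z)"
    unfolding g_def
    by (rule derivative_eq_intros refl has_field_derivative_Gamma z1 z2 | simp)+ (simp add: algebra_simps)
  have D0: "(g has_field_derivative 0) (at z)"
  proof (rule has_field_derivative_transform_within_open[where f="\<lambda>_. of_real pi" and S="- \<int>"])
    show "((\<lambda>_. complex_of_real pi) has_field_derivative 0) (at z)" by simp
    show "open (- (\<int> :: complex set))" by (simp add: open_Compl)
    show "z \<in> - \<int>" using z by simp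
    show "\<And>x. x \<in> - \<int> \<Longrightarrow> complex_of_real pi = g x" using gpi by simp
  qed
  have E: "Gamma z * Digamma z * Gamma (1 - z) * sin (of_real pi * z)
       + Gamma z * (- (Gamma (1 - z) * Digamma (1 - z))) * sin (of_real pi * z)
       + Gamma z * Gamma (1 - z) * (cos (of_real pi * z) * of_real pi) = 0"
    using DERIV_unique[OF D1 D0] .
  have nz: "Gamma z \<noteq> 0" "Gamma (1 - z) \<noteq> 0" "sin (of_real pi * z) \<noteq> 0"
    using z1 z2 sin_pi_nonzero[OF z] by (auto simp: Gamma_eq_zero_iff)
  define w where "w = of_real pi * z"
  have "Gamma z * Gamma (1 - z) * (sin w * (Digamma z - Digamma (1 - z)) + of_real pi * cos w) = 0"
    using E unfolding w_def by (simp add: algebra_simps)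
  then have X: "sin w * (Digamma z - Digamma (1 - z)) + of_real pi * cos w = 0"
    using nz by simp
  have sw: "sin w \<noteq> 0" using nz w_def by simp
  have "of_real pi * cos w = sin w * (Digamma (1 - z) - Digamma z)"
    using X by (simp add: algebra_simps add_eq_0_iff)
  then have "of_real pi * (cos w / sin w) = Digamma (1 - z) - Digamma z"
    using sw by (simp add: field_simps)
  then show ?thesis unfolding w_def[symmetric] cot_def .
qed



lemma inv_conj_pair:
  fixes a b :: real assumes a: "a \<noteq> 0"
  shows "inverse (complex_of_real a - \<i> * of_real b) + inverse (of_real a + \<i> * of_real b) = of_real (2 * a / (a\<^sup>2 + b\<^sup>2))"
proof -
  have d: "a\<^sup>2 + b\<^sup>2 \<noteq> 0" using a by (simp add: add_nonneg_eq_0_iff)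
  have u: "complex_of_real a - \<i> * of_real b \<noteq> 0" using a by (auto simp: complex_eq_iff)
  have v: "complex_of_real a + \<i> * of_real b \<noteq> 0" using a by (auto simp: complex_eq_iff)
  have p: "(complex_of_real a - \<i> * of_real b) * (of_real a + \<i> * of_real b) = of_real (a\<^sup>2 + b\<^sup>2)"
    by (simp add: complex_eq_iff power2_eq_square)
  have "inverse (complex_of_real a - \<i> * of_real b) + inverse (of_real a + \<i> * of_real b)
      = ((of_real a + \<i> * of_real b) + (complex_of_real a - \<i> * of_real b)) / ((complex_of_real a - \<i> * of_real b) * (of_real a + \<i> * of_real b))"
    using u v by (simp add: field_simps)
  also have "\<dots> = of_real (2 * a) / of_real (a\<^sup>2 + b\<^sup>2)" unfolding p by simp
  also have "\<dots> = of_real (2 * a / (a\<^sup>2 + b\<^sup>2))" by simp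
  finally show ?thesis .
qed

lemma cot_series:
  fixes z :: complex assumes z: "z \<notin> \<int>"
  assumes cd: "of_real pi * cot (of_real pi * z) = Digamma (1 - z) - Digamma z"
  shows "(\<lambda>k. inverse (z + of_nat k) - inverse (1 - z + of_nat k)) sums (of_real pi * cot (of_real pi * z))"
proof -
  have z0: "z \<noteq> 0" using z by auto
  have z1: "1 - z \<noteq> 0" using z by auto
  have s1: "(\<lambda>k. inverse (of_nat (Suc k)) - inverse (1 - z + of_nat k)) sums (Digamma (1 - z) + euler_mascheroni)"
    using summable_Digamma[OF z1] by (simp add: Digamma_def summable_sums)
  have s2: "(\<lambda>k. inverse (of_nat (Suc k)) - inverse (z + of_nat k)) sums (Digamma z + euler_mascheroni)"
    using summable_Digamma[OF z0] by (simp add: Digamma_def summable_sums)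
  have "(\<lambda>k. (inverse (of_nat (Suc k)) - inverse (1 - z + of_nat k)) - (inverse (of_nat (Suc k)) - inverse (z + of_nat k)))
     sums ((Digamma (1 - z) + euler_mascheroni) - (Digamma z + euler_mascheroni))"
    by (rule sums_diff[OF s1 s2])
  then show ?thesis unfolding cd by simp
qed


definition Pk :: "nat \<Rightarrow> real \<Rightarrow> real" where
  "Pk k l = (2 * real k + 1/2) / ((2 * real k + 1/2)\<^sup>2 + l\<^sup>2) - (2 * real k + 3/2) / ((2 * real k + 3/2)\<^sup>2 + l\<^sup>2)"

lemma not_Int_quarter:
  fixes z :: complex assumes "Re z = 1/4 \<or> Re z = 3/4" shows "z \<notin> \<int>"
proof
  assume "z \<in> \<int>"
  then obtain n :: int where "z = of_int n" by (auto elim!: Ints_cases)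
  then have "real_of_int n = 1/4 \<or> real_of_int n = 3/4" using assms by simp
  then have "real_of_int (4 * n) = 1 \<or> real_of_int (4 * n) = 3" by auto
  then have "4 * n = 1 \<or> 4 * n = 3" by linarith
  then show False by presburger
qed

lemma cos_i_real: "cos (\<i> * complex_of_real t) = of_real (cosh t)"
  using cosh_real[of t] by (simp add: cosh_def exp_minus)

lemma cot_pair:
  fixes l :: real
  defines "z1 \<equiv> complex_of_real (1/4) - \<i> * of_real (l/2)"
  defines "z2 \<equiv> complex_of_real (1/4) + \<i> * of_real (l/2)"
  shows "of_real pi * cot (of_real pi * z1) + of_real pi * cot (of_real pi * z2) = of_real (2 * pi / cosh (pi * l))"
proof -
  define A where "A = of_real pi * z1"
  have B: "of_real pi * z2 = of_real pi / 2 - A"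
    unfolding A_def z1_def z2_def by (simp add: algebra_simps)
  have cB: "cot (of_real pi * z2) = sin A / cos A"
    unfolding B cot_def using sin_cos_eq[of A] cos_sin_eq[of A] by simp
  have twoA: "2 * A = of_real pi / 2 - \<i> * of_real (pi * l)"
    unfolding A_def z1_def by (simp add: algebra_simps)
  have s2A: "sin (2 * A) = of_real (cosh (pi * l))"
  proof -
    have "of_real pi / 2 - 2 * A = \<i> * of_real (pi * l)" unfolding twoA by simp
    then show ?thesis using sin_cos_eq[of "2 * A"] cos_i_real[of "pi * l"] by simp
  qed
  have ch: "cosh (pi * l) \<noteq> 0" using cosh_real_ge_1[of "pi * l"] by linarith
  have sc: "2 * sin A * cos A = of_real (cosh (pi * l))" using s2A sin_double[of A] by simp
  have sA: "sin A \<noteq> 0" and cA: "cos A \<noteq> 0" using sc ch by auto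
  have "cot A + sin A / cos A = (cos A * cos A + sin A * sin A) / (sin A * cos A)"
    using sA cA by (simp add: cot_def field_simps)
  also have "cos A * cos A + sin A * sin A = 1"
    using sin_cos_squared_add[of A] by (simp add: power2_eq_square algebra_simps)
  also have "sin A * cos A = of_real (cosh (pi * l)) / 2" using sc by (simp add: field_simps)
  finally have "cot A + sin A / cos A = 2 / of_real (cosh (pi * l))" by simp
  then have "of_real pi * cot A + of_real pi * (sin A / cos A) = of_real pi * (2 / of_real (cosh (pi * l)))"
    by (metis distrib_left)
  also have "\<dots> = of_real (2 * pi / cosh (pi * l))" by simp
  finally show ?thesis unfolding A_def[symmetric] cB .
qed

lemma four_P:
  fixes l :: real
  defines "z1 \<equiv> complex_of_real (1/4) - \<i> * of_real (l/2)"
  defines "z2 \<equiv> complex_of_real (1/4) + \<i> * of_real (l/2)"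
  shows "(inverse (z1 + of_nat k) - inverse (1 - z1 + of_nat k)) + (inverse (z2 + of_nat k) - inverse (1 - z2 + of_nat k))
     = of_real (4 * Pk k l)"
proof -
  define c where "c = real k + 1/4"
  define d where "d = real k + 3/4"
  have e1: "z1 + of_nat k = of_real c - \<i> * of_real (l/2)" unfolding z1_def c_def by (simp add: complex_eq_iff)
  have e2: "z2 + of_nat k = of_real c + \<i> * of_real (l/2)" unfolding z2_def c_def by (simp add: complex_eq_iff)
  have e3: "1 - z2 + of_nat k = of_real d - \<i> * of_real (l/2)" unfolding z2_def d_def by (simp add: complex_eq_iff)
  have e4: "1 - z1 + of_nat k = of_real d + \<i> * of_real (l/2)" unfolding z1_def d_def by (simp add: complex_eq_iff)
  have c0: "c \<noteq> 0" "d \<noteq> 0" unfolding c_def d_def by linarith+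
  have r: "2 * c / (c\<^sup>2 + (l/2)\<^sup>2) - 2 * d / (d\<^sup>2 + (l/2)\<^sup>2) = 4 * Pk k l"
  proof -
    have "2 * c / (c\<^sup>2 + (l/2)\<^sup>2) = 4 * ((2 * real k + 1/2) / ((2 * real k + 1/2)\<^sup>2 + l\<^sup>2))"
    proof -
      have q1: "c\<^sup>2 + (l/2)\<^sup>2 = ((2*real k+1/2)\<^sup>2 + l\<^sup>2)/4" unfolding c_def by (simp add: power2_eq_square field_simps)
      have q2: "2*c = 2*real k + 1/2" unfolding c_def by simp
      show ?thesis unfolding q1 q2 by simp
    qed
    moreover have "2 * d / (d\<^sup>2 + (l/2)\<^sup>2) = 4 * ((2 * real k + 3/2) / ((2 * real k + 3/2)\<^sup>2 + l\<^sup>2))"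
    proof -
      have q1: "d\<^sup>2 + (l/2)\<^sup>2 = ((2*real k+3/2)\<^sup>2 + l\<^sup>2)/4" unfolding d_def by (simp add: power2_eq_square field_simps)
      have q2: "2*d = 2*real k + 3/2" unfolding d_def by simp
      show ?thesis unfolding q1 q2 by simp
    qed
    ultimately show ?thesis unfolding Pk_def by (simp add: algebra_simps)
  qed
  have "(inverse (z1 + of_nat k) - inverse (1 - z1 + of_nat k)) + (inverse (z2 + of_nat k) - inverse (1 - z2 + of_nat k))
     = (inverse (z1 + of_nat k) + inverse (z2 + of_nat k)) - (inverse (1 - z2 + of_nat k) + inverse (1 - z1 + of_nat k))"
    by (simp add: algebra_simps)
  also have "\<dots> = of_real (2 * c / (c\<^sup>2 + (l/2)\<^sup>2)) - of_real (2 * d / (d\<^sup>2 + (l/2)\<^sup>2))"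
    unfolding e1 e2 e3 e4 inv_conj_pair[OF c0(1)] inv_conj_pair[OF c0(2)] by (rule refl)
  also have "\<dots> = of_real (4 * Pk k l)" using r by (metis of_real_diff)
  finally show ?thesis by simp
qed

lemma sech_series: "(\<lambda>k. Pk k l) sums (pi / (2 * cosh (pi * l)))"
proof -
  define z1 where "z1 = complex_of_real (1/4) - \<i> * of_real (l/2)"
  define z2 where "z2 = complex_of_real (1/4) + \<i> * of_real (l/2)"
  have n1: "z1 \<notin> \<int>" by (rule not_Int_quarter) (simp add: z1_def)
  have n2: "z2 \<notin> \<int>" by (rule not_Int_quarter) (simp add: z2_def)
  have "(\<lambda>k. (inverse (z1 + of_nat k) - inverse (1 - z1 + of_nat k)) + (inverse (z2 + of_nat k) - inverse (1 - z2 + of_nat k)))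
    sums (of_real pi * cot (of_real pi * z1) + of_real pi * cot (of_real pi * z2))"
    by (intro sums_add cot_series n1 n2 cot_Digamma)
  then have "(\<lambda>k. complex_of_real (4 * Pk k l)) sums complex_of_real (2 * pi / cosh (pi * l))"
    unfolding four_P[of l, folded z1_def z2_def] cot_pair[of l, folded z1_def z2_def] .
  then have "(\<lambda>k. 4 * Pk k l) sums (2 * pi / cosh (pi * l))" by (simp only: sums_of_real_iff)
  from sums_divide[OF this, of 4] show ?thesis by simp
qed


lemma Pk_bound: "\<bar>Pk k l\<bar> \<le> 4 / (real k + 1)\<^sup>2"
proof -
  define B where "B = 2 * real k + 1/2"
  have B0: "B > 0" unfolding B_def by simp
  have d1: "B\<^sup>2 + l\<^sup>2 > 0" "(B+1)\<^sup>2 + l\<^sup>2 > 0" using B0 by (auto intro: add_pos_nonneg)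
  have eq: "Pk k l = (B * (B + 1) - l\<^sup>2) / ((B\<^sup>2 + l\<^sup>2) * ((B+1)\<^sup>2 + l\<^sup>2))"
    unfolding Pk_def B_def[symmetric]
    by (subst (2) add.commute[of "2 * real k"]) (use d1 in \<open>simp add: B_def field_simps power2_eq_square; simp add: algebra_simps\<close>)
  have "\<bar>B * (B + 1) - l\<^sup>2\<bar> \<le> (B+1)\<^sup>2 + l\<^sup>2" using B0 by (simp add: abs_le_iff power2_eq_square algebra_simps)
  then have "\<bar>Pk k l\<bar> \<le> ((B+1)\<^sup>2 + l\<^sup>2) / ((B\<^sup>2 + l\<^sup>2) * ((B+1)\<^sup>2 + l\<^sup>2))"
  proof -
    have "\<bar>Pk k l\<bar> = \<bar>B * (B + 1) - l\<^sup>2\<bar> / ((B\<^sup>2 + l\<^sup>2) * ((B+1)\<^sup>2 + l\<^sup>2))"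
      unfolding eq abs_divide using d1 by simp
    also have "\<dots> \<le> ((B+1)\<^sup>2 + l\<^sup>2) / ((B\<^sup>2 + l\<^sup>2) * ((B+1)\<^sup>2 + l\<^sup>2))"
      by (rule divide_right_mono) (use \<open>\<bar>B * (B + 1) - l\<^sup>2\<bar> \<le> _\<close> d1 in auto)
    finally show ?thesis .
  qed
  also have "\<dots> = 1 / (B\<^sup>2 + l\<^sup>2)" using d1 B0 by simp
  also have "\<dots> \<le> 1 / B\<^sup>2" using B0 d1 by (intro divide_left_mono) (auto intro!: mult_pos_pos)
  also have "\<dots> \<le> 4 / (real k + 1)\<^sup>2"
  proof -
    have "(real k + 1)\<^sup>2 \<le> 4 * B\<^sup>2" unfolding B_def by (simp add: power2_eq_square algebra_simps)
    then show ?thesis using B0 by (simp add: field_simps)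
  qed
  finally show ?thesis .
qed




lemma digamma_alt:
  fixes y :: real assumes y: "y > 0"
  shows "(\<lambda>k. 2 * (1 / (y + 2 * real k) - 1 / (y + 2 * real k + 1))) sums (Digamma ((y + 1) / 2) - Digamma (y / 2))"
proof -
  have a0: "(y + 1) / 2 \<noteq> 0" and b0: "y / 2 \<noteq> 0" using y by auto
  have s1: "(\<lambda>k. inverse (real (Suc k)) - inverse ((y + 1) / 2 + real k)) sums (Digamma ((y + 1) / 2) + euler_mascheroni)"
    using summable_Digamma[OF a0] by (simp add: Digamma_def summable_sums)
  have s2: "(\<lambda>k. inverse (real (Suc k)) - inverse (y / 2 + real k)) sums (Digamma (y / 2) + euler_mascheroni)"
    using summable_Digamma[OF b0] by (simp add: Digamma_def summable_sums)
  have "(\<lambda>k. (inverse (real (Suc k)) - inverse ((y + 1) / 2 + real k)) - (inverse (real (Suc k)) - inverse (y / 2 + real k)))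
     sums ((Digamma ((y + 1) / 2) + euler_mascheroni) - (Digamma (y / 2) + euler_mascheroni))"
    by (rule sums_diff[OF s1 s2])
  moreover have "(inverse (real (Suc k)) - inverse ((y + 1) / 2 + real k)) - (inverse (real (Suc k)) - inverse (y / 2 + real k))
      = 2 * (1 / (y + 2 * real k) - 1 / (y + 2 * real k + 1))" for k
  proof -
    have "inverse (y / 2 + real k) = 2 / (y + 2 * real k)" by (simp add: field_simps inverse_eq_divide)
    moreover have "inverse ((y + 1) / 2 + real k) = 2 / (y + 2 * real k + 1)" by (simp add: field_simps inverse_eq_divide)
    ultimately show ?thesis by simp
  qed
  ultimately show ?thesis by simp
qed

lemma sigma0_bound: "\<bar>sigma0 l\<bar> \<le> 1/2"
  using cosh_real_ge_1[of "pi * l"] unfolding sigma0_def by (simp add: field_simps)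

lemma sigma0_cont: "continuous_on UNIV sigma0"
proof -
  have h: "cosh (pi * l) \<noteq> 0" for l using cosh_real_ge_1[of "pi * l"] by linarith
  show ?thesis unfolding sigma0_def by (intro continuous_intros) (auto simp: h)
qed

lemma string_f_cont: "continuous_on UNIV (string_f x)"
proof (cases "x = 0")
  case True then show ?thesis unfolding string_f_def by simp
next
  case False
  have "continuous_on UNIV (\<lambda>l. 2 * x / (l\<^sup>2 + x\<^sup>2))"
    by (intro continuous_intros) (use False in \<open>simp add: add_nonneg_eq_0_iff\<close>)
  then show ?thesis using False unfolding string_f_def by simp
qed

lemma meas_sf: "(\<lambda>l. sigma0 l * string_f x l) \<in> borel_measurable lborel"
  using continuous_on_mult[OF sigma0_cont string_f_cont[of x]]
  by (simp add: borel_measurable_continuous_onI)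

lemma integrable_sf_pos:
  assumes x: "x > 0" shows "integrable lborel (\<lambda>l. sigma0 l * string_f x l)"
proof (rule Bochner_Integration.integrable_bound[OF integrable_mult_right[OF lorentz_int(1)[OF x], of 1]])
  show "(\<lambda>l. sigma0 l * string_f x l) \<in> borel_measurable lborel" by (rule meas_sf)
  show "AE l in lborel. norm (sigma0 l * string_f x l) \<le> norm (1 * (x / (l\<^sup>2 + x\<^sup>2)))"
  proof (intro AE_I2)
    fix l :: real
    have p: "x / (l\<^sup>2 + x\<^sup>2) \<ge> 0" using x by simp
    have "\<bar>sigma0 l * string_f x l\<bar> = \<bar>sigma0 l\<bar> * (2 * (x / (l\<^sup>2 + x\<^sup>2)))"
      using x p by (simp add: string_f_def abs_mult)
    also have "\<dots> \<le> 1/2 * (2 * (x / (l\<^sup>2 + x\<^sup>2)))"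
      by (rule mult_right_mono[OF sigma0_bound]) (use p in simp)
    finally show "norm (sigma0 l * string_f x l) \<le> norm (1 * (x / (l\<^sup>2 + x\<^sup>2)))" using p x by simp
  qed
qed



lemma summable_inv_sq: "summable (\<lambda>k::nat. 1 / (real k + 1)\<^sup>2)"
  using inverse_squares_sums by (simp add: sums_iff add.commute)

lemma integral_sf_pos:
  assumes x: "x > 0"
  shows "(\<integral>l. sigma0 l * string_f x l \<partial>lborel) = Digamma ((x + 3/2) / 2) - Digamma ((x + 1/2) / 2)"
proof -
  define B where "B k = 2 * real k + 1/2" for k
  define C where "C l = 2 / pi * (x / (l\<^sup>2 + x\<^sup>2))" for l
  define f where "f k l = 2 / pi * (x * B k / ((l\<^sup>2 + x\<^sup>2) * (l\<^sup>2 + (B k)\<^sup>2)) - x * (B k + 1) / ((l\<^sup>2 + x\<^sup>2) * (l\<^sup>2 + (B k + 1)\<^sup>2)))" for k l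
  have B0: "B k > 0" for k unfolding B_def by simp
  have C0: "C l \<ge> 0" for l unfolding C_def using x by simp
  have fP: "f k l = Pk k l * C l" for k l
  proof -
    have e1: "2 * real k + 3/2 = B k + 1" unfolding B_def by simp
    have q1: "l\<^sup>2 + x\<^sup>2 > 0" using x by (simp add: add_nonneg_pos)
    have q2: "(B k)\<^sup>2 + l\<^sup>2 > 0" "(B k + 1)\<^sup>2 + l\<^sup>2 > 0" using B0[of k] by (auto intro: add_pos_nonneg)
    show ?thesis unfolding f_def C_def Pk_def B_def[symmetric] e1
      by (simp add: add.commute[of "l\<^sup>2"] right_diff_distrib left_diff_distrib mult_ac)
  qed
  have sums_pt: "(\<lambda>k. f k l) sums (sigma0 l * string_f x l)" for l
  proof -
    have "(\<lambda>k. Pk k l * C l) sums (pi / (2 * cosh (pi * l)) * C l)"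
      by (rule sums_mult2[OF sech_series])
    moreover have "pi / (2 * cosh (pi * l)) * C l = sigma0 l * string_f x l"
    proof -
      have "pi / (2 * cosh (pi * l)) * (2 / pi * (x / (l\<^sup>2 + x\<^sup>2))) = 1 / (2 * cosh (pi * l)) * (2 * x / (l\<^sup>2 + x\<^sup>2))"
        by (simp add: divide_simps)
      then show ?thesis unfolding C_def sigma0_def string_f_def using x by simp
    qed
    ultimately show ?thesis unfolding fP by simp
  qed
  have int_f: "integrable lborel (f k)" for k
    unfolding f_def
    using pair_int(1)[OF x B0[of k]] pair_int(1)[OF x, of "B k + 1"] B0[of k]
    by (intro integrable_mult_right integrable_diff) auto
  have int_val: "integral\<^sup>L lborel (f k) = 2 * (1 / (x + B k) - 1 / (x + B k + 1))" for k
  proof -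
    have "integral\<^sup>L lborel (f k) = 2 / pi * (pi / (x + B k) - pi / (x + (B k + 1)))"
    proof -
      have b1: "B k + 1 > 0" using B0[of k] by simp
      note p1 = pair_int[OF x B0[of k]] and p2 = pair_int[OF x b1]
      show ?thesis unfolding f_def integral_mult_right_zero Bochner_Integration.integral_diff[OF p1(1) p2(1)] p1(2) p2(2) by (simp add: add.assoc)
    qed
    also have "\<dots> = 2 * (1 / (x + B k) - 1 / (x + B k + 1))"
      using B0[of k] x by (simp add: right_diff_distrib add.assoc)
    finally show ?thesis .
  qed
  have bound: "norm (f k l) \<le> 4 / (real k + 1)\<^sup>2 * C l" for k l
  proof -
    have "\<bar>Pk k l\<bar> * \<bar>C l\<bar> \<le> 4 / (real k + 1)\<^sup>2 * C l"
      using mult_right_mono[OF Pk_bound[of k l] C0[of l]] C0[of l] by simp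
    then show ?thesis unfolding fP real_norm_def abs_mult .
  qed
  have int_C: "integrable lborel C" unfolding C_def by (intro integrable_mult_right lorentz_int(1)[OF x])
  have int_Cv: "integral\<^sup>L lborel C = 2"
    unfolding C_def integral_mult_right_zero lorentz_int(2)[OF x] by simp
  have "(\<integral>l. (\<Sum>k. f k l) \<partial>lborel) = (\<Sum>k. integral\<^sup>L lborel (f k))"
  proof (rule integral_suminf)
    show "integrable lborel (f k)" for k by (rule int_f)
    show "AE l in lborel. summable (\<lambda>k. norm (f k l))"
    proof (rule AE_I2)
      fix l
      have s: "summable (\<lambda>k. 4 / (real k + 1)\<^sup>2 * C l)"
        using summable_mult2[OF summable_mult[OF summable_inv_sq, of 4], of "C l"] by simp
      show "summable (\<lambda>k. norm (f k l))"
        by (rule summable_comparison_test'[OF s, of 0]) (use bound in simp)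
    qed
    show "summable (\<lambda>k. \<integral>l. norm (f k l) \<partial>lborel)"
    proof (rule summable_comparison_test'[where g="\<lambda>k. 8 / (real k + 1)\<^sup>2"])
      show "summable (\<lambda>k. 8 / (real k + 1)\<^sup>2)"
        using summable_mult[OF summable_inv_sq, of 8] by simp
      fix k
      have "(\<integral>l. norm (f k l) \<partial>lborel) \<le> (\<integral>l. 4 / (real k + 1)\<^sup>2 * C l \<partial>lborel)"
        by (intro integral_mono integrable_norm int_f integrable_mult_right int_C bound)
      also have "\<dots> = 8 / (real k + 1)\<^sup>2" using int_Cv by simp
      finally have "(\<integral>l. norm (f k l) \<partial>lborel) \<le> 8 / (real k + 1)\<^sup>2" .
      moreover have "(\<integral>l. norm (f k l) \<partial>lborel) \<ge> 0" by (rule Bochner_Integration.integral_nonneg) simp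
      ultimately show "norm (\<integral>l. norm (f k l) \<partial>lborel) \<le> 8 / (real k + 1)\<^sup>2" by simp
    qed
  qed
  moreover have "(\<lambda>l. \<Sum>k. f k l) = (\<lambda>l. sigma0 l * string_f x l)"
    using sums_pt by (auto simp: sums_iff)
  ultimately have "(\<integral>l. sigma0 l * string_f x l \<partial>lborel) = (\<Sum>k. 2 * (1 / (x + B k) - 1 / (x + B k + 1)))"
    by (simp add: int_val)
  also have "\<dots> = Digamma ((x + 1/2 + 1) / 2) - Digamma ((x + 1/2) / 2)"
  proof (rule sums_unique[symmetric])
    have "x + 1/2 > 0" using x by simp
    from digamma_alt[OF this] show "(\<lambda>k. 2 * (1 / (x + B k) - 1 / (x + B k + 1))) sums (Digamma ((x + 1/2 + 1) / 2) - Digamma ((x + 1/2) / 2))"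
      unfolding B_def by (simp add: add.assoc add.commute add.left_commute)
  qed
  also have "x + 1/2 + 1 = x + 3/2" by simp
  finally show ?thesis .
qed



definition G :: "real \<Rightarrow> real" where "G x = (\<integral>l. sigma0 l * string_f x l \<partial>lborel)"
definition H :: "real \<Rightarrow> real" where "H x = Digamma ((\<bar>x - 1/2\<bar> + 1) / 2)"

lemma string_f_neg: "string_f (- x) l = - string_f x l"
  unfolding string_f_def by simp

lemma integrable_sf: "integrable lborel (\<lambda>l. sigma0 l * string_f x l)"
proof -
  consider "x > 0" | "x = 0" | "x < 0" by linarith
  then show ?thesis
  proof cases
    case 1 then show ?thesis by (rule integrable_sf_pos)
  next
    case 2 then show ?thesis by (simp add: string_f_def)
  next
    case 3
    have "integrable lborel (\<lambda>l. - (sigma0 l * string_f (- x) l))"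
      using integrable_sf_pos[of "-x"] 3 by simp
    then show ?thesis using string_f_neg[of x] by simp
  qed
qed

lemma G_neg: "G (- x) = - G x"
  unfolding G_def string_f_neg by simp

lemma G_H:
  assumes "x \<ge> 1/2 \<or> x \<le> -1/2 \<or> x = 0"
  shows "G x = H (x + 1) - H x"
proof -
  consider "x \<ge> 1/2" | "x \<le> -1/2" | "x = 0" using assms by auto
  then show ?thesis
  proof cases
    case 1
    have a1: "(\<bar>x + 1 - 1/2\<bar> + 1) / 2 = (x + 3/2) / 2" using 1 by simp
    have a2: "(\<bar>x - 1/2\<bar> + 1) / 2 = (x + 1/2) / 2" using 1 by simp
    have x0: "x > 0" using 1 by simp
    show ?thesis unfolding G_def integral_sf_pos[OF x0] H_def a1 a2 ..
  next
    case 2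
    have "G x = - G (- x)" using G_neg[of "-x"] by simp
    also have "G (- x) = Digamma ((- x + 3/2) / 2) - Digamma ((- x + 1/2) / 2)"
      unfolding G_def using integral_sf_pos[of "-x"] 2 by simp
    finally have g: "G x = - (Digamma ((- x + 3/2) / 2) - Digamma ((- x + 1/2) / 2))" .
    have h1: "H (x + 1) = Digamma ((- x + 1/2) / 2)"
      unfolding H_def by (rule arg_cong[where f=Digamma]) (use 2 in simp)
    have h2: "H x = Digamma ((- x + 3/2) / 2)"
      unfolding H_def by (rule arg_cong[where f=Digamma]) (use 2 in simp)
    show ?thesis unfolding g h1 h2 by simp
  next
    case 3
    have "G 0 = 0" unfolding G_def string_f_def by simp
    then show ?thesis unfolding H_def 3 by simp
  qed
qed



lemma int_Psi:
  assumes "half_pos_int s'" "half_pos_int s"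
  shows "(\<integral>l. sigma0 l * Psi s' (2 * s) l \<partial>lborel) =
         Digamma ((s' + s + 1) / 2) - Digamma ((\<bar>s' - s\<bar> + 1) / 2)"
proof -
  obtain n :: nat where n: "n > 0" "s' = real n / 2" using assms(1) by (auto simp: half_pos_int_def)
  obtain m :: nat where m: "m > 0" "s = real m / 2" using assms(2) by (auto simp: half_pos_int_def)
  define x0 where "x0 = - s' + 1/2 + s"
  have e2: "2 * s' = of_nat n" using n(2) by simp
  have fl: "nat \<lfloor>2 * s'\<rfloor> = n" unfolding e2 floor_of_nat nat_int ..
  have Psi_eq: "Psi s' (2 * s) l = (\<Sum>k<n. string_f (x0 + real k) l)" for l
    unfolding Psi_def fl x0_def by (simp add: algebra_simps)
  have "(\<integral>l. sigma0 l * Psi s' (2 * s) l \<partial>lborel) = (\<integral>l. (\<Sum>k<n. sigma0 l * string_f (x0 + real k) l) \<partial>lborel)"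
    unfolding Psi_eq by (simp add: sum_distrib_left)
  also have "\<dots> = (\<Sum>k<n. G (x0 + real k))"
    unfolding G_def by (rule Bochner_Integration.integral_sum) (rule integrable_sf)
  also have "\<dots> = (\<Sum>k<n. H (x0 + real (Suc k)) - H (x0 + real k))"
  proof (rule sum.cong[OF refl])
    fix k assume "k \<in> {..<n}"
    define j :: int where "j = int m - int n + 1 + 2 * int k"
    have xj: "x0 + real k = real_of_int j / 2" unfolding j_def x0_def n m by (simp add: field_simps)
    have "j \<ge> 1 \<or> j \<le> -1 \<or> j = 0" by linarith
    then have "x0 + real k \<ge> 1/2 \<or> x0 + real k \<le> -1/2 \<or> x0 + real k = 0"
      unfolding xj by auto
    moreover have "x0 + real (Suc k) = x0 + real k + 1" by simp
    ultimately show "G (x0 + real k) = H (x0 + real (Suc k)) - H (x0 + real k)"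
      using G_H by presburger
  qed
  also have "\<dots> = H (x0 + real n) - H (x0 + real 0)"
    by (rule sum_lessThan_telescope)
  also have "H (x0 + real n) = Digamma ((s' + s + 1) / 2)"
    unfolding H_def by (rule arg_cong[where f=Digamma]) (use n m in \<open>simp add: x0_def\<close>)
  also have "H (x0 + real 0) = Digamma ((\<bar>s' - s\<bar> + 1) / 2)"
    unfolding H_def by (rule arg_cong[where f=Digamma]) (simp add: x0_def abs_minus_commute)
  finally show ?thesis .
qed

theorem theorem5p1:
  fixes S :: "real set" and \<rho> :: "real \<Rightarrow> real" and s :: real
  assumes "finite S" and "S \<noteq> {}"
    and "\<forall>x\<in>S. half_pos_int x"
    and "\<forall>x\<in>S. \<rho> x > 0"
    and "(\<Sum>x\<in>S. \<rho> x) = 1"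
    and "s \<in> S"
  shows "vacuum_energy S \<rho> s =
    - (\<Sum>s'\<in>S. \<rho> s' * (Digamma ((s' + s + 1) / 2) - Digamma ((\<bar>s' - s\<bar> + 1) / 2)))"
  unfolding vacuum_energy_def
proof (rule arg_cong[where f=uminus], rule sum.cong[OF refl])
  fix s' assume "s' \<in> S"
  then show "\<rho> s' * (\<integral>lam. sigma0 lam * Psi s' (2 * s) lam \<partial>lborel) =
       \<rho> s' * (Digamma ((s' + s + 1) / 2) - Digamma ((\<bar>s' - s\<bar> + 1) / 2))"
    using int_Psi assms(3,6) by simp
qed


end
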